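(* Let $\alpha$, $a_n$ and the $\alpha$-sum-level sets $\mathcal L^{(\alpha)}_n$ be as in the context. Then for every $n\in\mathbb N$, \[\lambda(\mathcal L^{(\alpha)}_n)=\sum_{m=1}^n a_m\,\lambda(\mathcal L^{(\alpha)}_{n-m}).\]
   Context: Let $\mathcal U=[0,1]$, $\lambda$ Lebesgue measure. $\alpha=\{A_n:n\in\mathbb N\}$ is a countable partition of $\mathcal U$ (up to the point $0$) into left-open, right-closed intervals of positive length, ordered from right to left starting with $A_1$, accumulating only at $0$; $a_n:=\lambda(A_n)$, $t_n:=\sum_{k\ge n}a_k$, $A_n=(t_{n+1},t_n]$. $L_\alpha(x)=(t_n-x)/a_n$ on $A_n$, $L_\alpha(0)=0$. $C_\alpha(\ell_1,\dots,\ell_k):=\{x\in\mathcal U:L_\alpha^{i-1}(x)\in A_{\ell_i},\ i=1,\dots,k\}$. For $n\in\mathbb N$, $\mathcal L^{(\alpha)}_n:=\{x\in C_\alpha(\ell_1,\dots,\ell_k):\sum_{i=1}^k\ell_i=n\text{ for some }k\in\mathbb N\}$, and $\mathcal L^{(\alpha)}_0:=\mathcal U$. *)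

theory Defs
  imports "HOL-Analysis.Analysis"
begin

text \<open>The partition alpha is encoded by the sequence of lengths a 1, a 2, ...
  (the value a 0 is irrelevant). t_n = sum_{k>=n} a_k.\<close>

definition tl_sum :: "(nat \<Rightarrow> real) \<Rightarrow> nat \<Rightarrow> real" where
  "tl_sum a n = (\<Sum>k. a (k + n))"

definition part_int :: "(nat \<Rightarrow> real) \<Rightarrow> nat \<Rightarrow> real set" where
  "part_int a n = {tl_sum a (Suc n) <.. tl_sum a n}"

definition L_alpha :: "(nat \<Rightarrow> real) \<Rightarrow> real \<Rightarrow> real" where
  "L_alpha a x =
     (if \<exists>n\<ge>1. x \<in> part_int a n
      then (let n = (THE n. n \<ge> 1 \<and> x \<in> part_int a n) in (tl_sum a n - x) / a n)
      else 0)"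

definition cyl :: "(nat \<Rightarrow> real) \<Rightarrow> nat list \<Rightarrow> real set" where
  "cyl a ls = {x \<in> {0..1}. \<forall>i<length ls. (L_alpha a ^^ i) x \<in> part_int a (ls ! i)}"

definition sum_level :: "(nat \<Rightarrow> real) \<Rightarrow> nat \<Rightarrow> real set" where
  "sum_level a n =
     (if n = 0 then {0..1}
      else {x. \<exists>ls. ls \<noteq> [] \<and> (\<forall>l\<in>set ls. l \<ge> 1) \<and> sum_list ls = n \<and> x \<in> cyl a ls})"

end

theory Submission
  imports Defs
begin

context
  fixes a :: "nat \<Rightarrow> real"
  assumes pos: "\<forall>k\<ge>1. a k > 0"
    and sm: "(\<lambda>k. a (Suc k)) sums 1"
begin

lemma summ: "summable (\<lambda>k. a (k + n))"
proof -
  have "summable (\<lambda>k. a (Suc k))" using sm sums_summable by blast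
  hence "summable a" using summable_Suc_iff[of a] by simp
  thus ?thesis using summable_iff_shift[of a n] by simp
qed

lemma t_step: "tl_sum a n = a n + tl_sum a (Suc n)"
  using suminf_split_head[OF summ[of n]] unfolding tl_sum_def by simp

lemma t1: "tl_sum a 1 = 1"
  using sm unfolding tl_sum_def by (simp add: sums_iff)

lemma t_nonneg: "n \<ge> 1 \<Longrightarrow> tl_sum a n \<ge> 0"
  unfolding tl_sum_def using pos by (intro suminf_nonneg summ) (simp add: less_imp_le)

lemma t_mono: assumes "1 \<le> m" "m \<le> n" shows "tl_sum a n \<le> tl_sum a m"
  using assms(2)
proof (induction n rule: dec_induct)
  case base then show ?case by simp
next
  case (step n)
  then show ?case using t_step[of n] pos assms(1) by (smt (verit) order_trans)
qed

lemma t_le1: "n \<ge> 1 \<Longrightarrow> tl_sum a n \<le> 1"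
  using t_mono[of 1 n] t1 by simp

lemma part_sub: "m \<ge> 1 \<Longrightarrow> part_int a m \<subseteq> {0..1}"
  unfolding part_int_def using t_nonneg[of "Suc m"] t_le1[of m] by auto

lemma part_disj: "1 \<le> m \<Longrightarrow> m < n \<Longrightarrow> part_int a m \<inter> part_int a n = {}"
  unfolding part_int_def using t_mono[of "Suc m" n] by auto

lemma L_eq: "m \<ge> 1 \<Longrightarrow> x \<in> part_int a m \<Longrightarrow> L_alpha a x = (tl_sum a m - x) / a m"
proof -
  assume m: "m \<ge> 1" and x: "x \<in> part_int a m"
  have "(THE n. n \<ge> 1 \<and> x \<in> part_int a n) = m"
  proof (rule the_equality)
    show "1 \<le> m \<and> x \<in> part_int a m" using m x by simp
    fix n assume "1 \<le> n \<and> x \<in> part_int a n"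
    then show "n = m" using part_disj[of m n] part_disj[of n m] m x
      by (metis disjoint_iff linorder_neqE_nat)
  qed
  then show ?thesis using m x unfolding L_alpha_def by auto
qed

lemma L_range: "m \<ge> 1 \<Longrightarrow> x \<in> part_int a m \<Longrightarrow> L_alpha a x \<in> {0..<1}"
proof -
  assume m: "m \<ge> 1" and x: "x \<in> part_int a m"
  have am: "a m > 0" using pos m by simp
  have "0 \<le> tl_sum a m - x" "tl_sum a m - x < a m" using x t_step[of m] by (auto simp: part_int_def)
  then show ?thesis using L_eq[OF m x] am by simp
qed

lemma L_01: "L_alpha a x \<in> {0..1}"
proof (cases "\<exists>n\<ge>1. x \<in> part_int a n")
  case True
  then obtain n where "n \<ge> 1" "x \<in> part_int a n" by blast
  then show ?thesis using L_range[of n x] by auto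
next
  case False
  then have "L_alpha a x = 0" unfolding L_alpha_def by (simp only: if_False)
  then show ?thesis by simp
qed

lemma sum_list_pos: "ls \<noteq> [] \<Longrightarrow> \<forall>l\<in>set ls. l \<ge> (1::nat) \<Longrightarrow> sum_list ls \<ge> 1"
  by (cases ls) auto

lemma decomp:
  assumes n: "n \<ge> 1"
  shows "sum_level a n = (\<Union>m\<in>{1..n}. part_int a m \<inter> {x. L_alpha a x \<in> sum_level a (n-m)})"
proof (intro equalityI subsetI)
  fix x assume "x \<in> sum_level a n"
  then obtain ls where ls: "ls \<noteq> []" "\<forall>l\<in>set ls. l \<ge> 1" "sum_list ls = n" "x \<in> cyl a ls"
    using n unfolding sum_level_def by auto
  then obtain l ls' where lls: "ls = l # ls'" by (cases ls) auto
  have l1: "l \<ge> 1" using ls lls by auto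
  have x01: "x \<in> {0..1}" and xc: "\<forall>i<length ls. (L_alpha a ^^ i) x \<in> part_int a (ls ! i)"
    using ls(4) unfolding cyl_def by auto
  have xl: "x \<in> part_int a l" using xc lls by (metis funpow_0 length_Cons nth_Cons_0 zero_less_Suc)
  have ln: "l \<le> n" using ls lls by auto
  have "L_alpha a x \<in> sum_level a (n - l)"
  proof (cases "ls' = []")
    case True then show ?thesis using ls lls L_01 by (simp add: sum_level_def)
  next
    case False
    have s': "sum_list ls' \<ge> 1" using sum_list_pos[OF False] ls lls by auto
    have "L_alpha a x \<in> cyl a ls'" unfolding cyl_def
    proof (intro CollectI conjI allI impI)
      show "L_alpha a x \<in> {0..1}" by (rule L_01)
      fix i assume "i < length ls'"
      then have "(L_alpha a ^^ Suc i) x \<in> part_int a (ls ! Suc i)" using xc lls by auto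
      then show "(L_alpha a ^^ i) (L_alpha a x) \<in> part_int a (ls' ! i)"
        using lls by (simp add: funpow_Suc_right del: funpow.simps)
    qed
    then show ?thesis using False ls lls s' unfolding sum_level_def by auto
  qed
  then show "x \<in> (\<Union>m\<in>{1..n}. part_int a m \<inter> {x. L_alpha a x \<in> sum_level a (n-m)})"
    using xl l1 ln by auto
next
  fix x assume "x \<in> (\<Union>m\<in>{1..n}. part_int a m \<inter> {x. L_alpha a x \<in> sum_level a (n-m)})"
  then obtain m where m: "1 \<le> m" "m \<le> n" "x \<in> part_int a m" "L_alpha a x \<in> sum_level a (n-m)" by auto
  have x01: "x \<in> {0..1}" using part_sub[OF m(1)] m(3) by blast
  show "x \<in> sum_level a n"
  proof (cases "m = n")
    case True
    have "x \<in> cyl a [m]" using x01 m by (simp add: cyl_def)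
    then show ?thesis using True n m(1) unfolding sum_level_def
      by (auto intro!: exI[of _ "[m]"])
  next
    case False
    then obtain ls' where ls': "ls' \<noteq> []" "\<forall>l\<in>set ls'. l \<ge> 1" "sum_list ls' = n - m" "L_alpha a x \<in> cyl a ls'"
      using m unfolding sum_level_def by (auto split: if_splits)
    have "x \<in> cyl a (m # ls')" unfolding cyl_def
    proof (intro CollectI conjI allI impI)
      show "x \<in> {0..1}" by (rule x01)
      fix i assume i: "i < length (m # ls')"
      show "(L_alpha a ^^ i) x \<in> part_int a ((m # ls') ! i)"
      proof (cases i)
        case 0 then show ?thesis using m by simp
      next
        case (Suc j)
        then have "j < length ls'" using i by simp
        then have "(L_alpha a ^^ j) (L_alpha a x) \<in> part_int a (ls' ! j)" using ls'(4) unfolding cyl_def by auto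
        then show ?thesis using Suc by (simp add: funpow_Suc_right del: funpow.simps)
      qed
    qed
    then show ?thesis using n ls' m False unfolding sum_level_def
      by (auto intro!: exI[of _ "m # ls'"])
  qed
qed

lemma sl_sub: "sum_level a n \<subseteq> {0..1}"
  unfolding sum_level_def cyl_def by auto

lemma piece_eq:
  assumes m: "m \<ge> 1" and S: "S \<subseteq> {0..1}"
  shows "part_int a m \<inter> {x. L_alpha a x \<in> S} = (\<lambda>x. (tl_sum a m - x) / a m) -` (S - {1})"
proof -
  have am: "a m > 0" using pos m by simp
  have ts: "tl_sum a (Suc m) = tl_sum a m - a m" using t_step[of m] by simp
  show ?thesis
  proof (intro equalityI subsetI)
    fix x assume x: "x \<in> part_int a m \<inter> {x. L_alpha a x \<in> S}"
    then show "x \<in> (\<lambda>x. (tl_sum a m - x) / a m) -` (S - {1})"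
      using L_eq[OF m] L_range[OF m] by fastforce
  next
    fix x assume x: "x \<in> (\<lambda>x. (tl_sum a m - x) / a m) -` (S - {1})"
    then have g: "(tl_sum a m - x) / a m \<in> S" "(tl_sum a m - x) / a m \<noteq> 1" by auto
    have "0 \<le> (tl_sum a m - x) / a m" "(tl_sum a m - x) / a m \<le> 1" using S g(1) by auto
    then have "0 \<le> (tl_sum a m - x) / a m" "(tl_sum a m - x) / a m < 1"
      using g(2) order.not_eq_order_implies_strict by blast+
    then have "0 \<le> tl_sum a m - x" "tl_sum a m - x < a m" using am
      by (simp_all add: zero_le_divide_iff divide_less_eq)
    then have xp: "x \<in> part_int a m" unfolding part_int_def ts by auto
    show "x \<in> part_int a m \<inter> {x. L_alpha a x \<in> S}" using xp g L_eq[OF m xp] by simp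
  qed
qed

lemma G_meas: "(\<lambda>x. (tl_sum a m - x) / a m) \<in> borel_measurable borel"
  by measurable

lemma piece_sets: "S \<in> sets borel \<Longrightarrow> (\<lambda>x. (tl_sum a m - x) / a m) -` (S - {1}) \<in> sets borel"
  using measurable_sets[OF G_meas, of "S - {1}"] by auto

lemma piece_measure:
  assumes m: "m \<ge> 1" and Sb: "S \<in> sets borel"
  shows "measure lborel ((\<lambda>x. (tl_sum a m - x) / a m) -` (S - {1})) = a m * measure lborel S"
proof -
  define G where "G = (\<lambda>x. (tl_sum a m - x) / a m)"
  define c where "c = - 1 / a m"
  have am: "a m > 0" using pos m by simp
  have c0: "c \<noteq> 0" using am by (simp add: c_def)
  have Geq: "G = (\<lambda>x. tl_sum a m / a m + c * x)" unfolding G_def c_def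
    by (rule ext) (simp add: diff_divide_distrib)
  have S'b: "S - {1} \<in> sets borel" using Sb by auto
  have Gm: "G \<in> borel_measurable borel" unfolding G_def by (rule G_meas)
  have "emeasure lborel (S - {1}) = emeasure (density (distr lborel borel G) (\<lambda>_. ennreal \<bar>c\<bar>)) (S - {1})"
    using lborel_real_affine[OF c0, of "tl_sum a m / a m"] unfolding Geq by simp
  also have "\<dots> = ennreal \<bar>c\<bar> * emeasure (distr lborel borel G) (S - {1})"
    using S'b Gm by (simp add: emeasure_density nn_integral_cmult_indicator)
  also have "\<dots> = ennreal \<bar>c\<bar> * emeasure lborel (G -` (S - {1}))"
    using S'b Gm by (simp add: emeasure_distr)
  finally have e1: "emeasure lborel (S - {1}) = ennreal \<bar>c\<bar> * emeasure lborel (G -` (S - {1}))" .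
  have e2: "emeasure lborel (S - {1}) = emeasure lborel S"
    using Sb by (intro emeasure_Diff_null_set) (auto intro: countable_imp_null_set_lborel)
  have "emeasure lborel (G -` (S - {1})) = ennreal (a m) * emeasure lborel S"
  proof -
    have h: "ennreal (a m) * ennreal \<bar>c\<bar> = 1" using am
      by (simp add: c_def ennreal_mult[symmetric] abs_if)
    have "ennreal (a m) * emeasure lborel S = ennreal (a m) * (ennreal \<bar>c\<bar> * emeasure lborel (G -` (S - {1})))"
      using e1 e2 by simp
    also have "\<dots> = (ennreal (a m) * ennreal \<bar>c\<bar>) * emeasure lborel (G -` (S - {1}))"
      by (simp only: mult.assoc)
    also have "\<dots> = emeasure lborel (G -` (S - {1}))" using h by simp
    finally show ?thesis by simp
  qed
  then show ?thesis unfolding G_def measure_def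
    using am by (simp add: enn2real_mult)
qed

lemma pieces_eq:
  "m \<in> {1..n} \<Longrightarrow> part_int a m \<inter> {x. L_alpha a x \<in> sum_level a (n-m)} =
     (\<lambda>x. (tl_sum a m - x) / a m) -` (sum_level a (n-m) - {1})"
  by (intro piece_eq sl_sub) auto

lemma sl_borel: "sum_level a n \<in> sets borel"
proof (induction n rule: less_induct)
  case (less n)
  show ?case
  proof (cases "n = 0")
    case True then show ?thesis by (simp add: sum_level_def)
  next
    case False
    then have n: "n \<ge> 1" by simp
    have "sum_level a n = (\<Union>m\<in>{1..n}. (\<lambda>x. (tl_sum a m - x) / a m) -` (sum_level a (n-m) - {1}))"
      using decomp[OF n] pieces_eq by simp
    also have "\<dots> \<in> sets borel"
      using less n by (intro sets.finite_UN piece_sets) auto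
    finally show ?thesis .
  qed
qed

lemma main:
  assumes n: "n \<ge> 1"
  shows "measure lborel (sum_level a n) = (\<Sum>m=1..n. a m * measure lborel (sum_level a (n - m)))"
proof -
  define P where "P m = part_int a m \<inter> {x. L_alpha a x \<in> sum_level a (n-m)}" for m
  have Pb: "P m \<in> sets lborel" if "m \<in> {1..n}" for m
    using pieces_eq[OF that] piece_sets[OF sl_borel] unfolding P_def by simp
  have "measure lborel (sum_level a n) = measure lborel (\<Union>m\<in>{1..n}. P m)"
    using decomp[OF n] unfolding P_def by simp
  also have "\<dots> = (\<Sum>m\<in>{1..n}. measure lborel (P m))"
  proof (rule measure_finite_Union)
    show "P ` {1..n} \<subseteq> sets lborel" using Pb by auto
    show "disjoint_family_on P {1..n}" unfolding disjoint_family_on_def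
    proof (intro ballI impI)
      fix i j assume i: "i \<in> {1..n}" and j: "j \<in> {1..n}" and ij: "i \<noteq> j"
      have "part_int a i \<inter> part_int a j = {}"
      proof (cases "i < j")
        case True then show ?thesis using part_disj[of i j] i by simp
      next
        case False then have "j < i" using ij by simp
        then show ?thesis using part_disj[of j i] j by auto
      qed
      then show "P i \<inter> P j = {}" unfolding P_def by blast
    qed
    fix m assume m: "m \<in> {1..n}"
    have "P m \<subseteq> {0..1}" using part_sub m unfolding P_def by auto
    then have "emeasure lborel (P m) \<le> emeasure lborel {0..1::real}"
      by (intro emeasure_mono) auto
    then show "emeasure lborel (P m) \<noteq> \<infinity>" by (auto simp: top_unique)
  qed simp
  also have "\<dots> = (\<Sum>m=1..n. a m * measure lborel (sum_level a (n - m)))"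
  proof (rule sum.cong[OF refl])
    fix m assume m: "m \<in> {1..n}"
    show "measure lborel (P m) = a m * measure lborel (sum_level a (n - m))"
      unfolding P_def pieces_eq[OF m] using m by (intro piece_measure sl_borel) auto
  qed
  finally show ?thesis .
qed

end

theorem lemma3p1:
  fixes a :: "nat \<Rightarrow> real" and n :: nat
  assumes "\<forall>k\<ge>1. a k > 0"
    and "(\<lambda>k. a (Suc k)) sums 1"
    and "n \<ge> 1"
  shows "measure lborel (sum_level a n) = (\<Sum>m=1..n. a m * measure lborel (sum_level a (n - m)))"
  using main[OF assms] .

end
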